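(* Let $n,m\ge1$, $a\in\mathbb{R}^n$, $d\in\mathbb{R}^m$ with $\|a\|=1\ge\|d\|$, $S_{\le0}=\{(x,y)\in\mathbb{R}^{n+m}:\|x\|\le\|y\|,\ a^\mathsf{T} x+d^\mathsf{T} y\le0\}$, $\lambda\in\mathbb{R}^n$ with $\|\lambda\|=1$, and $\phi_\lambda(y)=\max_x\{\lambda^\mathsf{T} x:(x,y)\in S_{\le0}\}$ for $y\in\mathbb{R}^m$. Then $C^\phi_\lambda=\{(x,y)\in\mathbb{R}^{n+m}:\phi_\lambda(y)\le\lambda^\mathsf{T} x\}$ is maximal $S_{\le0}$-free. Additionally, if $(\bar x,\bar y)\notin S_{\le0}$ satisfies $a^\mathsf{T}\bar x+d^\mathsf{T}\bar y\le0$ and $\lambda=\bar x/\|\bar x\|$, then $(\bar x,\bar y)\in\operatorname{int}(C^\phi_\lambda)$.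
   Context: $\|\cdot\|$ is the Euclidean norm. A convex set $C$ is $S$-free if $\operatorname{int}(C)\cap S=\emptyset$, and maximal $S$-free if it is $S$-free and no $S$-free convex set strictly contains it. *)

theory Defs
  imports "HOL-Analysis.Analysis"
begin

text \<open>Points of R^(n+m) are pairs (x,y) with x in R^n, y in R^m; the product
  of Euclidean spaces carries the Euclidean norm and topology.\<close>

definition S_free :: "'a::real_normed_vector set \<Rightarrow> 'a set \<Rightarrow> bool" where
  "S_free C S \<longleftrightarrow> convex C \<and> interior C \<inter> S = {}"

definition maximal_S_free :: "'a::real_normed_vector set \<Rightarrow> 'a set \<Rightarrow> bool" where
  "maximal_S_free C S \<longleftrightarrow> S_free C S \<and> \<not> (\<exists>C'. S_free C' S \<and> C \<subset> C')"

definition S_le0 :: "real^'n \<Rightarrow> real^'m \<Rightarrow> ((real^'n) \<times> (real^'m)) set" where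
  "S_le0 a d = {(x, y). norm x \<le> norm y \<and> a \<bullet> x + d \<bullet> y \<le> 0}"

text \<open>phi_lambda(y) = max { lambda^T x : (x,y) in S_le0 }; the maximum exists
  (the fibre is nonempty and compact), so it is the supremum.\<close>
definition phi :: "real^'n \<Rightarrow> real^'m \<Rightarrow> real^'n \<Rightarrow> real^'m \<Rightarrow> real" where
  "phi a d l y = Sup {l \<bullet> x | x. (x, y) \<in> S_le0 a d}"

definition C_phi :: "real^'n \<Rightarrow> real^'m \<Rightarrow> real^'n \<Rightarrow> ((real^'n) \<times> (real^'m)) set" where
  "C_phi a d l = {(x, y). phi a d l y \<le> l \<bullet> x}"

end

theory Submission
  imports Defs
begin

lemma K0:
  fixes t s R C N \<alpha> \<beta> :: real
  assumes "N \<ge> 0" "N\<^sup>2 = R\<^sup>2 - C\<^sup>2" "s \<ge> 0" "t\<^sup>2 + s\<^sup>2 = 1" "C < R*t"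
    "\<alpha> \<le> C" "\<alpha>\<^sup>2 + \<beta>\<^sup>2 \<le> R\<^sup>2" "R \<ge> 0" "N = 0"
  shows "t*\<alpha> + s*\<beta> \<le> t*C + s*N"
proof -
  have "t\<^sup>2 \<le> 1" using assms(4) by (metis le_add_same_cancel1 zero_le_power2)
  hence "\<bar>t\<bar> \<le> 1" by (simp add: abs_square_le_1)
  hence "R*t \<le> R*1" using assms(8) by (intro mult_left_mono) auto
  hence "C < R" using assms(5) by simp
  have "C\<^sup>2 = R\<^sup>2" using assms(2,9) by simp
  hence "C = R \<or> C = -R" by (simp add: power2_eq_iff)
  hence C: "C = -R" using \<open>C < R\<close> by auto
  have "R \<le> -\<alpha>" using C assms(6) by simp
  hence "R\<^sup>2 \<le> (-\<alpha>)\<^sup>2" using assms(8) by (intro power_mono) auto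
  hence "\<beta>\<^sup>2 \<le> 0" using assms(7) unfolding power2_minus by linarith
  hence "\<beta>\<^sup>2 = 0" using zero_le_power2[of \<beta>] by linarith
  hence b: "\<beta> = 0" by simp
  have "(-\<alpha>)\<^sup>2 \<le> R\<^sup>2" using assms(7) zero_le_power2[of \<beta>] unfolding power2_minus by linarith
  hence "-\<alpha> \<le> R" using assms(8) by (rule power2_le_imp_le)
  hence "\<alpha> = C" using C assms(6) by simp
  thus ?thesis using b assms(9) by simp
qed

lemma Kkey:
  fixes t s R C N :: real
  assumes "N \<ge> 0" "N\<^sup>2 = R\<^sup>2 - C\<^sup>2" "s \<ge> 0" "t\<^sup>2 + s\<^sup>2 = 1" "C < R*t" "R \<ge> 0"
  shows "t*N \<ge> s*C"
proof -
  have s2: "s\<^sup>2 = 1 - t\<^sup>2" using assms(4) by linarith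
  have E: "(t*N)\<^sup>2 - (s*C)\<^sup>2 = (R*t)\<^sup>2 - C\<^sup>2"
  proof -
    have "(t*N)\<^sup>2 - (s*C)\<^sup>2 = t\<^sup>2*(R\<^sup>2 - C\<^sup>2) - (1 - t\<^sup>2)*C\<^sup>2"
      by (simp only: power_mult_distrib assms(2) s2)
    also have "\<dots> = (R*t)\<^sup>2 - C\<^sup>2" by (simp add: power_mult_distrib right_diff_distrib left_diff_distrib)
    finally show ?thesis .
  qed
  show ?thesis
  proof (cases "C \<le> 0 \<and> t \<ge> 0")
    case True thus ?thesis using assms(1,3) mult_nonneg_nonneg[of t N] mult_nonneg_nonpos[of s C] by linarith
  next
    case F2: False
    show ?thesis
    proof (cases "C > 0")
      case True
      have "t > 0"
      proof (rule ccontr)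
        assume "\<not> t > 0" hence "t \<le> 0" by simp
        hence "R*t \<le> 0" using assms(6) mult_nonneg_nonpos[of R t] by simp
        thus False using True assms(5) by linarith
      qed
      have "C\<^sup>2 \<le> (R*t)\<^sup>2" using True assms(5) by (intro power_mono) auto
      hence "(s*C)\<^sup>2 \<le> (t*N)\<^sup>2" using E by linarith
      moreover have "0 \<le> t*N" using \<open>t > 0\<close> assms(1) by simp
      ultimately show ?thesis by (rule power2_le_imp_le)
    next
      case False
      hence "t < 0" "C \<le> 0" using F2 by auto
      hence "R*t \<le> 0" using assms(6) mult_nonneg_nonpos[of R t] by simp
      hence "-(R*t) \<le> -C" "0 \<le> -(R*t)" using assms(5) by auto
      hence "(-(R*t))\<^sup>2 \<le> (-C)\<^sup>2" by (intro power_mono) auto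
      hence "(R*t)\<^sup>2 \<le> C\<^sup>2" by simp
      hence "(-(t*N))\<^sup>2 \<le> (-(s*C))\<^sup>2" using E unfolding power2_minus by linarith
      moreover have "0 \<le> -(s*C)" using assms(3) \<open>C \<le> 0\<close> mult_nonneg_nonpos[of s C] by simp
      ultimately have "-(t*N) \<le> -(s*C)" by (rule power2_le_imp_le)
      thus ?thesis by simp
    qed
  qed
qed

lemma K:
  fixes t s R C N \<alpha> \<beta> :: real
  assumes "N \<ge> 0" "N\<^sup>2 = R\<^sup>2 - C\<^sup>2" "s \<ge> 0" "t\<^sup>2 + s\<^sup>2 = 1" "C < R*t"
    "\<alpha> \<le> C" "\<alpha>\<^sup>2 + \<beta>\<^sup>2 \<le> R\<^sup>2" "R \<ge> 0"
  shows "t*\<alpha> + s*\<beta> \<le> t*C + s*N"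
proof (cases "N = 0")
  case True thus ?thesis using K0 assms by blast
next
  case False
  hence Np: "N > 0" using assms(1) by simp
  have key: "t*N \<ge> s*C" using Kkey assms by blast
  define \<mu> where "\<mu> = t - s*C/N"
  have mu: "\<mu> \<ge> 0" using key Np unfolding \<mu>_def by (simp add: field_simps)
  have am: "C*\<alpha> + N*\<beta> \<le> R\<^sup>2"
  proof -
    have "0 \<le> (C-\<alpha>)\<^sup>2 + (N-\<beta>)\<^sup>2" by simp
    hence "2*(C*\<alpha> + N*\<beta>) \<le> C\<^sup>2 + N\<^sup>2 + (\<alpha>\<^sup>2 + \<beta>\<^sup>2)" by (simp add: power2_diff algebra_simps)
    moreover have "C\<^sup>2 + N\<^sup>2 = R\<^sup>2" using assms(2) by simp
    ultimately have "2*(C*\<alpha> + N*\<beta>) \<le> 2*R\<^sup>2" using assms(7) by linarith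
    thus ?thesis by simp
  qed
  have "t*\<alpha> + s*\<beta> = (s*C/N)*\<alpha> + s*\<beta> + \<mu>*\<alpha>" unfolding \<mu>_def by (simp add: algebra_simps)
  also have "\<dots> \<le> (s*C/N)*\<alpha> + s*\<beta> + \<mu>*C" using mu assms(6) by (simp add: mult_left_mono)
  also have "(s*C/N)*\<alpha> + s*\<beta> = s/N * (C*\<alpha> + N*\<beta>)" using Np by (simp add: field_simps)
  also have "\<dots> \<le> s/N * R\<^sup>2" using am assms(3) Np by (intro mult_left_mono) auto
  also have "s/N * R\<^sup>2 + \<mu>*C = t*C + s*N"
  proof -
    have "s/N * R\<^sup>2 + \<mu>*C = s/N * (R\<^sup>2 - C\<^sup>2) + t*C" unfolding \<mu>_def by (simp add: algebra_simps power2_eq_square)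
    also have "\<dots> = s/N * N\<^sup>2 + t*C" using assms(2) by simp
    also have "\<dots> = t*C + s*N" using Np by (simp add: power2_eq_square)
    finally show ?thesis .
  qed
  finally show ?thesis by simp
qed

lemma fibre:
  fixes a l x :: "'a::real_inner" and r c N :: real
  assumes na: "norm a = 1" and nl: "norm l = 1" and r: "r \<ge> 0" and N: "N \<ge> 0" "N\<^sup>2 = r\<^sup>2 - c\<^sup>2"
  shows "\<exists>x. norm x \<le> r \<and> a \<bullet> x \<le> c \<and>
           l \<bullet> x = (if r * (a \<bullet> l) \<le> c then r else (a \<bullet> l) * c + sqrt (1 - (a \<bullet> l)\<^sup>2) * N)"
    and "norm x \<le> r \<Longrightarrow> a \<bullet> x \<le> c \<Longrightarrow>
           l \<bullet> x \<le> (if r * (a \<bullet> l) \<le> c then r else (a \<bullet> l) * c + sqrt (1 - (a \<bullet> l)\<^sup>2) * N)"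
proof -
  define t where "t = a \<bullet> l"
  define s where "s = sqrt (1 - t\<^sup>2)"
  define lp where "lp = l - t *\<^sub>R a"
  have aa: "a \<bullet> a = 1" using na by (simp add: dot_square_norm)
  have ll: "l \<bullet> l = 1" using nl by (simp add: dot_square_norm)
  have "\<bar>t\<bar> \<le> 1" unfolding t_def using Cauchy_Schwarz_ineq2[of a l] na nl by simp
  hence t2: "t\<^sup>2 \<le> 1" by (simp add: abs_square_le_1)
  have s0: "s \<ge> 0" unfolding s_def using t2 by simp
  have s2: "s\<^sup>2 = 1 - t\<^sup>2" unfolding s_def by (rule real_sqrt_pow2) (use t2 in linarith)
  have ts: "t\<^sup>2 + s\<^sup>2 = 1" using s2 by simp
  have alp: "a \<bullet> lp = 0" unfolding lp_def t_def using aa by (simp add: inner_diff_right)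
  have llp: "l \<bullet> lp = s\<^sup>2" unfolding lp_def s2 using ll by (simp add: inner_diff_right t_def inner_commute power2_eq_square)
  have lplp: "lp \<bullet> lp = s\<^sup>2"
  proof -
    have "lp \<bullet> lp = l \<bullet> lp - t * (a \<bullet> lp)" unfolding lp_def by (simp add: inner_diff_left)
    thus ?thesis using alp llp by simp
  qed
  have nlp: "norm lp = s" using lplp s0 by (metis norm_eq_sqrt_inner real_sqrt_unique)
  have c2: "c\<^sup>2 \<le> r\<^sup>2" using N by (smt (verit) zero_le_power2)
  show "\<exists>x. norm x \<le> r \<and> a \<bullet> x \<le> c \<and>
           l \<bullet> x = (if r * (a \<bullet> l) \<le> c then r else (a \<bullet> l) * c + sqrt (1 - (a \<bullet> l)\<^sup>2) * N)"
  proof (cases "r * t \<le> c")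
    case True
    have "norm (r *\<^sub>R l) \<le> r \<and> a \<bullet> (r *\<^sub>R l) \<le> c \<and> l \<bullet> (r *\<^sub>R l) = r"
      using True r nl ll by (simp add: t_def)
    moreover have "r * (a \<bullet> l) \<le> c" using True unfolding t_def .
    ultimately show ?thesis by (intro exI[of _ "r *\<^sub>R l"]) simp
  next
    case False
    define k where "k = (if s = 0 then 0 else N / s)"
    define x where "x = c *\<^sub>R a + k *\<^sub>R lp"
    have ax: "a \<bullet> x = c" unfolding x_def using aa alp by (simp add: inner_add_right)
    have "l \<bullet> x = c * t + k * s\<^sup>2" unfolding x_def using llp by (simp add: inner_add_right t_def inner_commute)
    also have "\<dots> = t * c + s * N" unfolding k_def by (simp add: power2_eq_square)
    finally have lx: "l \<bullet> x = t * c + s * N" .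
    have "x \<bullet> x = c\<^sup>2 * (a \<bullet> a) + 2 * c * k * (a \<bullet> lp) + k\<^sup>2 * (lp \<bullet> lp)"
      unfolding x_def by (simp add: inner_add_left inner_add_right inner_commute power2_eq_square algebra_simps)
    also have "\<dots> = c\<^sup>2 + k\<^sup>2 * s\<^sup>2" using aa alp lplp by simp
    also have "\<dots> \<le> r\<^sup>2"
    proof (cases "s = 0")
      case True thus ?thesis using c2 k_def by simp
    next
      case False
      hence "k\<^sup>2 * s\<^sup>2 = N\<^sup>2" unfolding k_def by (simp add: power_divide)
      thus ?thesis using N by simp
    qed
    finally have "(norm x)\<^sup>2 \<le> r\<^sup>2" by (simp add: power2_norm_eq_inner)
    hence "norm x \<le> r" using r by (rule power2_le_imp_le)
    thus ?thesis using ax lx False unfolding t_def s_def by (intro exI[of _ x]) auto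
  qed
  assume xr: "norm x \<le> r" and ac: "a \<bullet> x \<le> c"
  show "l \<bullet> x \<le> (if r * (a \<bullet> l) \<le> c then r else (a \<bullet> l) * c + sqrt (1 - (a \<bullet> l)\<^sup>2) * N)"
  proof (cases "r * t \<le> c")
    case True
    have "l \<bullet> x \<le> norm l * norm x" by (rule norm_cauchy_schwarz)
    thus ?thesis using True xr nl unfolding t_def by simp
  next
    case False
    define \<alpha> where "\<alpha> = a \<bullet> x"
    define \<beta> where "\<beta> = norm (x - \<alpha> *\<^sub>R a)"
    have "l = t *\<^sub>R a + lp" unfolding lp_def by simp
    hence "l \<bullet> x = t * \<alpha> + lp \<bullet> x" unfolding \<alpha>_def by (simp add: inner_add_left)
    also have "lp \<bullet> x = lp \<bullet> (x - \<alpha> *\<^sub>R a)" using alp by (simp add: inner_diff_right inner_commute)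
    also have "\<dots> \<le> norm lp * \<beta>" unfolding \<beta>_def by (rule norm_cauchy_schwarz)
    finally have lx: "l \<bullet> x \<le> t * \<alpha> + s * \<beta>" using nlp by simp
    have "\<beta>\<^sup>2 = x \<bullet> x - 2 * \<alpha> * (a \<bullet> x) + \<alpha>\<^sup>2 * (a \<bullet> a)" unfolding \<beta>_def power2_norm_eq_inner
      by (simp add: inner_diff_left inner_diff_right inner_commute power2_eq_square algebra_simps)
    hence "\<alpha>\<^sup>2 + \<beta>\<^sup>2 = (norm x)\<^sup>2" using aa unfolding \<alpha>_def power2_norm_eq_inner by (simp add: power2_eq_square)
    also have "\<dots> \<le> r\<^sup>2" using xr by (simp add: power_mono)
    finally have ab: "\<alpha>\<^sup>2 + \<beta>\<^sup>2 \<le> r\<^sup>2" .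
    have "t * \<alpha> + s * \<beta> \<le> t * c + s * N"
      using K[OF N(1) N(2) s0 ts _ _ ab r] False ac unfolding \<alpha>_def by simp
    thus ?thesis using lx False unfolding t_def s_def by simp
  qed
qed

lemma Nsq:
  fixes d y :: "'a::real_inner"
  assumes nd: "norm d \<le> 1"
  shows "(norm (y - ((1 / (1 + sqrt (1 - (norm d)\<^sup>2))) * (d \<bullet> y)) *\<^sub>R d))\<^sup>2 = (norm y)\<^sup>2 - (d \<bullet> y)\<^sup>2"
proof -
  define q where "q = sqrt (1 - (norm d)\<^sup>2)"
  define g where "g = 1 / (1 + q)"
  define z where "z = d \<bullet> y"
  have "(norm d)\<^sup>2 \<le> 1" using nd by (simp add: abs_square_le_1)
  hence q0: "q \<ge> 0" and q2: "q\<^sup>2 = 1 - (norm d)\<^sup>2" unfolding q_def by auto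
  have dd: "d \<bullet> d = 1 - q\<^sup>2" using q2 by (simp add: dot_square_norm)
  have "(norm (y - (g * z) *\<^sub>R d))\<^sup>2 = y \<bullet> y - 2 * g * z * (d \<bullet> y) + (g * z)\<^sup>2 * (d \<bullet> d)"
    unfolding power2_norm_eq_inner by (simp add: inner_diff_left inner_diff_right inner_commute power2_eq_square algebra_simps)
  also have "\<dots> = y \<bullet> y - z\<^sup>2 * (2 * g - g\<^sup>2 * (1 - q\<^sup>2))" unfolding z_def dd by (simp add: power2_eq_square algebra_simps)
  also have "2 * g - g\<^sup>2 * (1 - q\<^sup>2) = 1"
  proof -
    define w where "w = 1 + q"
    have w: "w > 0" unfolding w_def using q0 by simp
    have "q = w - 1" unfolding w_def by simp
    hence "2 * g - g\<^sup>2 * (1 - q\<^sup>2) = 2 * (1/w) - (1/w)\<^sup>2 * (1 - (w - 1)\<^sup>2)" unfolding g_def w_def by simp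
    also have "\<dots> = 1" using w by (simp add: field_simps power2_eq_square)
    finally show ?thesis .
  qed
  finally show ?thesis unfolding g_def q_def z_def by (simp add: power2_norm_eq_inner)
qed

lemma Nconv:
  fixes d y1 y2 :: "'a::real_inner" and g u v :: real
  assumes "u \<ge> 0" "v \<ge> 0"
  shows "norm ((u *\<^sub>R y1 + v *\<^sub>R y2) - (g * (d \<bullet> (u *\<^sub>R y1 + v *\<^sub>R y2))) *\<^sub>R d)
     \<le> u * norm (y1 - (g * (d \<bullet> y1)) *\<^sub>R d) + v * norm (y2 - (g * (d \<bullet> y2)) *\<^sub>R d)"
proof -
  have "(u *\<^sub>R y1 + v *\<^sub>R y2) - (g * (d \<bullet> (u *\<^sub>R y1 + v *\<^sub>R y2))) *\<^sub>R d
      = u *\<^sub>R (y1 - (g * (d \<bullet> y1)) *\<^sub>R d) + v *\<^sub>R (y2 - (g * (d \<bullet> y2)) *\<^sub>R d)"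
    by (simp add: inner_add_right algebra_simps scaleR_add_left)
  also have "norm \<dots> \<le> norm (u *\<^sub>R (y1 - (g * (d \<bullet> y1)) *\<^sub>R d)) + norm (v *\<^sub>R (y2 - (g * (d \<bullet> y2)) *\<^sub>R d))"
    by (rule norm_triangle_ineq)
  finally show ?thesis using assms by simp
qed

lemma arc_le:
  fixes r c N t u1 u2 :: real
  assumes r: "r \<ge> 0" and N: "N \<ge> 0" "N\<^sup>2 = r\<^sup>2 - c\<^sup>2" and t2: "t\<^sup>2 \<le> 1"
    and u: "u1\<^sup>2 + u2\<^sup>2 = 1" "u2 \<ge> 0" "u1 \<ge> t"
  shows "u1 * c + u2 * N \<le> (if r * t \<le> c then r else t * c + sqrt (1 - t\<^sup>2) * N)"
proof (cases "r * t \<le> c")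
  case True
  have id: "(u1 * c + u2 * N)\<^sup>2 + (u1 * N - u2 * c)\<^sup>2 = (u1\<^sup>2 + u2\<^sup>2) * (c\<^sup>2 + N\<^sup>2)"
    by (simp add: power2_eq_square algebra_simps)
  have "(u1\<^sup>2 + u2\<^sup>2) * (c\<^sup>2 + N\<^sup>2) = r\<^sup>2" using u(1) N(2) by simp
  hence "(u1 * c + u2 * N)\<^sup>2 \<le> r\<^sup>2" using id zero_le_power2[of "u1 * N - u2 * c"] by linarith
  hence "u1 * c + u2 * N \<le> r" using r by (rule power2_le_imp_le)
  thus ?thesis using True by simp
next
  case False
  have "r \<noteq> 0"
  proof
    assume "r = 0"
    hence "c\<^sup>2 \<le> 0" using N zero_le_power2[of N] by simp
    hence "c = 0" by simp
    thus False using False \<open>r = 0\<close> by simp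
  qed
  hence rp: "r > 0" using r by simp
  define s where "s = sqrt (1 - t\<^sup>2)"
  have s0: "s \<ge> 0" unfolding s_def using t2 by simp
  have "s\<^sup>2 = 1 - t\<^sup>2" unfolding s_def by (rule real_sqrt_pow2) (use t2 in linarith)
  hence s2: "s\<^sup>2 = 1\<^sup>2 - (-t)\<^sup>2" by simp
  have TS: "(-c/r)\<^sup>2 + (N/r)\<^sup>2 = 1" using N(2) rp by (simp add: power_divide field_simps)
  have lt: "-t < 1 * (-c/r)" using False rp by (simp add: field_simps)
  have "(-c/r) * (-u1) + (N/r) * u2 \<le> (-c/r) * (-t) + (N/r) * s"
    using K[OF s0 s2 _ TS lt, of "-u1" u2] u N rp by simp
  hence "(u1 * c + u2 * N) / r \<le> (t * c + s * N) / r" by (simp add: add_divide_distrib mult.commute)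
  hence "u1 * c + u2 * N \<le> t * c + s * N" using rp by (simp add: divide_le_cancel)
  thus ?thesis using False unfolding s_def by simp
qed

lemma arc_attain:
  fixes r c N t :: real
  assumes r: "r \<ge> 0" and N: "N \<ge> 0" "N\<^sup>2 = r\<^sup>2 - c\<^sup>2" and t2: "t\<^sup>2 \<le> 1"
  shows "\<exists>u1 u2. u1\<^sup>2 + u2\<^sup>2 = 1 \<and> u2 \<ge> 0 \<and> u1 \<ge> t \<and>
     u1 * c + u2 * N = (if r * t \<le> c then r else t * c + sqrt (1 - t\<^sup>2) * N)"
proof (cases "r * t \<le> c")
  case True
  show ?thesis
  proof (cases "r = 0")
    case True
    hence "c\<^sup>2 \<le> 0" using N zero_le_power2[of N] by simp
    hence "c = 0" by simp
    have "\<bar>t\<bar> \<le> 1" using t2 by (simp add: abs_square_le_1)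
    hence "t \<le> 1" by simp
    thus ?thesis using \<open>c = 0\<close> True \<open>r * t \<le> c\<close> by (intro exI[of _ 1] exI[of _ 0]) simp
  next
    case False
    hence rp: "r > 0" using r by simp
    have "(c/r)\<^sup>2 + (N/r)\<^sup>2 = 1" using N(2) rp by (simp add: power_divide field_simps)
    moreover have "c/r \<ge> t" using \<open>r * t \<le> c\<close> rp by (simp add: field_simps)
    moreover have "N/r \<ge> 0" using N rp by simp
    moreover have "(c/r) * c + (N/r) * N = r" using N(2) rp by (simp add: field_simps power2_eq_square)
    ultimately show ?thesis using \<open>r * t \<le> c\<close> by (intro exI[of _ "c/r"] exI[of _ "N/r"]) simp
  qed
next
  case False
  have "t\<^sup>2 + (sqrt (1 - t\<^sup>2))\<^sup>2 = 1" using t2 by simp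
  thus ?thesis using False t2 by (intro exI[of _ t] exI[of _ "sqrt (1 - t\<^sup>2)"]) simp
qed

theorem proposition6:
  fixes a :: "real^'n" and d :: "real^'m" and l :: "real^'n"
  assumes "norm a = 1" and "norm d \<le> 1" and "norm l = 1"
  shows "maximal_S_free (C_phi a d l) (S_le0 a d) \<and>
    (\<forall>xb yb. (xb, yb) \<notin> S_le0 a d \<and> a \<bullet> xb + d \<bullet> yb \<le> 0 \<and> l = xb /\<^sub>R norm xb
       \<longrightarrow> (xb, yb) \<in> interior (C_phi a d l))"
proof -
  define t where "t = a \<bullet> l"
  define g where "g = 1 / (1 + sqrt (1 - (norm d)\<^sup>2))"
  define NN where "NN = (\<lambda>y::real^'m. norm (y - (g * (d \<bullet> y)) *\<^sub>R d))"
  define \<psi> where "\<psi> = (\<lambda>y::real^'m. if norm y * t \<le> -(d \<bullet> y) then norm y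
                        else t * (-(d \<bullet> y)) + sqrt (1 - t\<^sup>2) * NN y)"
  define S where "S = S_le0 a d"
  define C where "C = C_phi a d l"
  have "\<bar>t\<bar> \<le> 1" unfolding t_def using Cauchy_Schwarz_ineq2[of a l] assms by simp
  hence t2: "t\<^sup>2 \<le> 1" by (simp add: abs_square_le_1)
  have NN0: "NN y \<ge> 0" for y by (simp add: NN_def)
  have NN2: "(NN y)\<^sup>2 = (norm y)\<^sup>2 - (-(d \<bullet> y))\<^sup>2" for y
    using Nsq[OF assms(2), of y] unfolding NN_def g_def by simp
  have memS: "(x, y) \<in> S \<longleftrightarrow> norm x \<le> norm y \<and> a \<bullet> x \<le> -(d \<bullet> y)" for x y
    unfolding S_def S_le0_def by auto
  have opt: "\<exists>x. (x, y) \<in> S \<and> l \<bullet> x = \<psi> y" for y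
    using fibre(1)[OF assms(1) assms(3) norm_ge_zero[of y] NN0[of y] NN2[of y]]
    unfolding memS \<psi>_def t_def by auto
  have upper: "l \<bullet> x \<le> \<psi> y" if "(x, y) \<in> S" for x y
    using fibre(2)[OF assms(1) assms(3) norm_ge_zero[of y] NN0[of y] NN2[of y], of x] that
    unfolding memS \<psi>_def t_def by auto
  have phi_eq: "phi a d l y = \<psi> y" for y
  proof -
    obtain x where x: "(x, y) \<in> S" "l \<bullet> x = \<psi> y" using opt by blast
    show ?thesis unfolding phi_def
    proof (rule cSup_eq_maximum)
      show "\<psi> y \<in> {l \<bullet> x |x. (x, y) \<in> S_le0 a d}" using x(1) x(2)[symmetric] unfolding S_def by blast
      show "z \<le> \<psi> y" if "z \<in> {l \<bullet> x |x. (x, y) \<in> S_le0 a d}" for z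
        using that upper unfolding S_def by auto
    qed
  qed
  have memC: "(x, y) \<in> C \<longleftrightarrow> \<psi> y \<le> l \<bullet> x" for x y
    unfolding C_def C_phi_def using phi_eq by simp
  have psi_norm: "\<psi> y \<le> norm y" for y
  proof -
    obtain x where x: "(x, y) \<in> S" "l \<bullet> x = \<psi> y" using opt by blast
    have "l \<bullet> x \<le> norm l * norm x" by (rule norm_cauchy_schwarz)
    thus ?thesis using x memS assms(3) by simp
  qed
  have psi_conv: "\<psi> (u *\<^sub>R y1 + v *\<^sub>R y2) \<le> u * \<psi> y1 + v * \<psi> y2"
    if uv: "u \<ge> 0" "v \<ge> 0" "u + v = 1" for u v y1 y2
  proof -
    define y where "y = u *\<^sub>R y1 + v *\<^sub>R y2"
    obtain w1 w2 where w: "w1\<^sup>2 + w2\<^sup>2 = 1" "w2 \<ge> 0" "w1 \<ge> t"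
        "w1 * (-(d \<bullet> y)) + w2 * NN y = \<psi> y"
      using arc_attain[OF norm_ge_zero NN0 NN2 t2, of y] unfolding \<psi>_def by blast
    have le1: "w1 * (-(d \<bullet> y1)) + w2 * NN y1 \<le> \<psi> y1"
      using arc_le[OF norm_ge_zero NN0 NN2 t2 w(1-3), of y1] unfolding \<psi>_def by simp
    have le2: "w1 * (-(d \<bullet> y2)) + w2 * NN y2 \<le> \<psi> y2"
      using arc_le[OF norm_ge_zero NN0 NN2 t2 w(1-3), of y2] unfolding \<psi>_def by simp
    have lin: "-(d \<bullet> y) = u * (-(d \<bullet> y1)) + v * (-(d \<bullet> y2))" unfolding y_def
      by (simp add: inner_add_right)
    have cv: "NN y \<le> u * NN y1 + v * NN y2" unfolding NN_def y_def using Nconv uv by blast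
    have "\<psi> y = w1 * (u * (-(d \<bullet> y1)) + v * (-(d \<bullet> y2))) + w2 * NN y" using w(4) lin by simp
    also have "\<dots> \<le> w1 * (u * (-(d \<bullet> y1)) + v * (-(d \<bullet> y2))) + w2 * (u * NN y1 + v * NN y2)"
      using cv w(2) by (simp add: mult_left_mono)
    also have "\<dots> = u * (w1 * (-(d \<bullet> y1)) + w2 * NN y1) + v * (w1 * (-(d \<bullet> y2)) + w2 * NN y2)"
      by (simp add: algebra_simps)
    also have "\<dots> \<le> u * \<psi> y1 + v * \<psi> y2"
      using le1 le2 uv by (intro add_mono mult_left_mono) auto
    finally show ?thesis unfolding y_def .
  qed
  have convC: "convex C"
  proof -
    have "u *\<^sub>R (x1, y1) + v *\<^sub>R (x2, y2) \<in> C"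
      if "(x1, y1) \<in> C" "(x2, y2) \<in> C" "u \<ge> 0" "v \<ge> 0" "u + v = 1" for x1 y1 x2 y2 u v
    proof -
      have "\<psi> (u *\<^sub>R y1 + v *\<^sub>R y2) \<le> u * \<psi> y1 + v * \<psi> y2" using psi_conv that by blast
      also have "\<dots> \<le> u * (l \<bullet> x1) + v * (l \<bullet> x2)"
        using that memC by (intro add_mono mult_left_mono) auto
      also have "\<dots> = l \<bullet> (u *\<^sub>R x1 + v *\<^sub>R x2)" by (simp add: inner_add_right)
      finally show ?thesis using memC by simp
    qed
    thus ?thesis unfolding convex_def by auto
  qed
  define Opn where "Opn = {p :: (real^'n) \<times> (real^'m). norm (snd p) < l \<bullet> fst p}"
  have openO: "open Opn" unfolding Opn_def
    by (rule open_Collect_less) (intro continuous_intros)+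
  have OC: "Opn \<subseteq> C"
  proof
    fix p assume "p \<in> Opn"
    then obtain x y where p: "p = (x, y)" "norm y < l \<bullet> x" unfolding Opn_def by (cases p) auto
    thus "p \<in> C" using memC psi_norm[of y] by simp
  qed
  have OiC: "Opn \<subseteq> interior C" using interior_maximal[OF OC openO] .
  have intS: "interior C \<inter> S = {}"
  proof (rule ccontr)
    assume "interior C \<inter> S \<noteq> {}"
    then obtain x y where xy: "(x, y) \<in> interior C" "(x, y) \<in> S" by auto
    then obtain e where e: "e > 0" "ball (x, y) e \<subseteq> C" using mem_interior by blast
    have "dist (x, y) (x - (e/2) *\<^sub>R l, y) = e/2"
      using e(1) assms(3) by (simp add: dist_Pair_Pair dist_norm)
    hence "(x - (e/2) *\<^sub>R l, y) \<in> C" using e by auto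
    hence "\<psi> y \<le> l \<bullet> x - e/2" using memC assms(3) by (simp add: inner_diff_right dot_square_norm)
    moreover have "l \<bullet> x \<le> \<psi> y" using upper xy(2) .
    ultimately show False using e(1) by simp
  qed
  have Sfree: "S_free C S" unfolding S_free_def using convC intS by simp
  have maxi: "\<not> (\<exists>C'. S_free C' S \<and> C \<subset> C')"
  proof
    assume "\<exists>C'. S_free C' S \<and> C \<subset> C'"
    then obtain C' where C': "convex C'" "interior C' \<inter> S = {}" "C \<subset> C'"
      unfolding S_free_def by blast
    then obtain x0 y0 where p: "(x0, y0) \<in> C'" "(x0, y0) \<notin> C" by auto
    have lt: "l \<bullet> x0 < \<psi> y0" using p(2) memC by simp
    obtain xs where xs: "(xs, y0) \<in> S" "l \<bullet> xs = \<psi> y0" using opt by blast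
    define \<delta> where "\<delta> = \<psi> y0 - l \<bullet> x0"
    have \<delta>: "\<delta> > 0" unfolding \<delta>_def using lt by simp
    define \<sigma> where "\<sigma> = (norm y0 - \<psi> y0 + 1) / \<delta>"
    have \<sigma>: "\<sigma> > 0" unfolding \<sigma>_def using \<delta> psi_norm[of y0] by simp
    have sd: "\<sigma> * \<delta> = norm y0 - \<psi> y0 + 1" unfolding \<sigma>_def using \<delta> by simp
    define q where "q = (xs + \<sigma> *\<^sub>R (xs - x0), y0)"
    have "l \<bullet> (xs + \<sigma> *\<^sub>R (xs - x0)) = \<psi> y0 + \<sigma> * \<delta>"
      unfolding \<delta>_def using xs(2) by (simp add: inner_add_right inner_diff_right)
    hence "q \<in> Opn" unfolding Opn_def q_def using sd by simp
    hence qi: "q \<in> interior C'" using OiC interior_mono[of C C'] C'(3) by auto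
    define e where "e = 1 / (1 + \<sigma>)"
    have e: "e > 0" "e \<le> 1" unfolding e_def using \<sigma> by auto
    have "(x0, y0) - e *\<^sub>R ((x0, y0) - q) \<in> interior C'"
      by (rule mem_interior_convex_shrink[OF C'(1) qi p(1) e])
    moreover have "(x0, y0) - e *\<^sub>R ((x0, y0) - q) = (xs, y0)"
    proof -
      have "x0 - (xs + \<sigma> *\<^sub>R (xs - x0)) = (-(1 + \<sigma>)) *\<^sub>R (xs - x0)" by (simp add: algebra_simps)
      moreover have "e * (1 + \<sigma>) = 1" unfolding e_def using \<sigma> by simp
      ultimately have "e *\<^sub>R (x0 - (xs + \<sigma> *\<^sub>R (xs - x0))) = (e * (-(1 + \<sigma>))) *\<^sub>R (xs - x0)"
        "e * (-(1 + \<sigma>)) = -1" by (simp_all add: algebra_simps)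
      hence "e *\<^sub>R (x0 - (xs + \<sigma> *\<^sub>R (xs - x0))) = -(xs - x0)" by simp
      thus ?thesis unfolding q_def by (simp add: algebra_simps)
    qed
    ultimately show False using xs(1) C'(2) by auto
  qed
  have part2: "(xb, yb) \<in> interior C"
    if H: "(xb, yb) \<notin> S" "a \<bullet> xb + d \<bullet> yb \<le> 0" "l = xb /\<^sub>R norm xb" for xb yb
  proof -
    have lt: "norm yb < norm xb" using H(1,2) unfolding S_def S_le0_def by auto
    hence "xb \<noteq> 0" by auto
    hence "l \<bullet> xb = norm xb" using H(3) by (simp add: dot_square_norm power2_eq_square)
    hence "(xb, yb) \<in> Opn" unfolding Opn_def using lt by simp
    thus ?thesis using OiC by auto
  qed
  show ?thesis
    using Sfree maxi part2 unfolding maximal_S_free_def S_def C_def by blast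
qed

end
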